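(* Let $\mathcal{R}$ be a consistent set of probabilistic constraints over $\mathcal{L}$ and $(\mathcal{R}_i)_{i\ge1}$ a sequence of consistent sets of probabilistic constraints over $\mathcal{L}$ such that $\mathrm{Mod}(\mathcal{R}_i)$ converges to $\mathrm{Mod}(\mathcal{R})$ in the Blaschke distance. Then the sequence $(P^{ME}_{\mathcal{R}_i})$ converges to $P^{ME}_{\mathcal{R}}$.
   Context: $\mathcal{L}$ is a propositional language over a finite set of variables; $\mathrm{Int}(\mathcal{L})$ is the set of truth assignments. A probability distribution over $\mathcal{L}$ is $P:\mathrm{Int}(\mathcal{L})\to[0,1]$ summing to $1$, regarded as a vector in $\mathbb{R}^{\mathrm{Int}(\mathcal{L})}$ with the Euclidean norm; $P(\phi)=\sum_{v\models\phi}P(v)$. A probabilistic constraint is $c_0+\sum_{i=1}^k c_i\,\mathsf{p}(\phi_i)\ge 0$ ($c_i\in\mathbb{R}$, $\phi_i\in\mathcal{L}$), satisfied by $P$ iff $c_0+\sum_ic_iP(\phi_i)\ge0$; $\mathrm{Mod}(\mathcal{R})$ is the set of distributions satisfying all constraints of $\mathcal{R}$, and $\mathcal{R}$ is consistent iff it is nonempty; then $P^{ME}_{\mathcal{R}}$ is the unique element of $\mathrm{Mod}(\mathcal{R})$ maximizing $H(P)=-\sum_vP(v)\log P(v)$. The Blaschke distance between convex sets $S_1,S_2$ of distributions is $\inf\{\delta\in\mathbb{R}\mid \forall P_1\in S_1\exists P_2\in S_2: \|P_1-P_2\|\le\delta \text{ and } \forall P_2\in S_2\exists P_1\in S_1:\|P_2-P_1\|\le\delta\}$.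 *)

theory Defs
  imports "HOL-Analysis.Analysis"
begin

datatype 'v form = Var 'v | Top | Bot | Neg "'v form" | Conj "'v form" "'v form"
  | Disj "'v form" "'v form" | Imp "'v form" "'v form"

type_synonym 'v interp = "'v set"

fun models :: "'v interp \<Rightarrow> 'v form \<Rightarrow> bool" where
  "models v (Var x) = (x \<in> v)"
| "models v Top = True"
| "models v Bot = False"
| "models v (Neg f) = (\<not> models v f)"
| "models v (Conj f g) = (models v f \<and> models v g)"
| "models v (Disj f g) = (models v f \<or> models v g)"
| "models v (Imp f g) = (models v f \<longrightarrow> models v g)"

definition is_dist :: "('v::finite interp \<Rightarrow> real) \<Rightarrow> bool" where
  "is_dist P \<longleftrightarrow> (\<forall>v. 0 \<le> P v) \<and> (\<Sum>v\<in>UNIV. P v) = 1"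

definition prob :: "('v::finite interp \<Rightarrow> real) \<Rightarrow> 'v form \<Rightarrow> real" where
  "prob P \<phi> = (\<Sum>v\<in>{v. models v \<phi>}. P v)"

definition enorm :: "('v::finite interp \<Rightarrow> real) \<Rightarrow> real" where
  "enorm P = sqrt (\<Sum>v\<in>UNIV. (P v)\<^sup>2)"

text \<open>A probabilistic constraint c0 + sum_i c_i p(phi_i) >= 0, given as (c0, [(c1,phi1),...,(ck,phik)]).\<close>
type_synonym 'v constr = "real \<times> (real \<times> 'v form) list"

definition satisfies :: "('v::finite interp \<Rightarrow> real) \<Rightarrow> 'v constr \<Rightarrow> bool" where
  "satisfies P c \<longleftrightarrow> fst c + (\<Sum>(ci, \<phi>i) \<leftarrow> snd c. ci * prob P \<phi>i) \<ge> 0"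

definition Mod :: "'v::finite constr set \<Rightarrow> ('v interp \<Rightarrow> real) set" where
  "Mod R = {P. is_dist P \<and> (\<forall>c\<in>R. satisfies P c)}"

definition consistent :: "'v::finite constr set \<Rightarrow> bool" where
  "consistent R \<longleftrightarrow> Mod R \<noteq> {}"

definition entropy :: "('v::finite interp \<Rightarrow> real) \<Rightarrow> real" where
  "entropy P = - (\<Sum>v\<in>UNIV. P v * ln (P v))"

definition ME :: "'v::finite constr set \<Rightarrow> ('v interp \<Rightarrow> real)" where
  "ME R = (THE P. P \<in> Mod R \<and> (\<forall>Q\<in>Mod R. entropy Q \<le> entropy P))"

definition blaschke :: "('v::finite interp \<Rightarrow> real) set \<Rightarrow> ('v interp \<Rightarrow> real) set \<Rightarrow> real" where
  "blaschke S1 S2 = Inf {\<delta>. (\<forall>P1\<in>S1. \<exists>P2\<in>S2. enorm (\<lambda>v. P1 v - P2 v) \<le> \<delta>)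
                          \<and> (\<forall>P2\<in>S2. \<exists>P1\<in>S1. enorm (\<lambda>v. P2 v - P1 v) \<le> \<delta>)}"

end

theory Submission imports Defs begin

lemma aux1: "(A::real) < B \<Longrightarrow> M = -A/2 \<Longrightarrow> E = -B \<Longrightarrow> E/2 < M" by simp
lemma aux2: "(E+F)/2 < (M::real) \<Longrightarrow> M \<le> E \<Longrightarrow> E \<le> F \<Longrightarrow> False" by simp
lemma aux3: "0 \<le> c + A \<Longrightarrow> 0 \<le> c + B \<Longrightarrow> 0 \<le> c + ((A::real) + B)/2" by (simp add: field_simps)
lemma aux4: "\<not> (a::real) \<le> b \<Longrightarrow> a - (a-b)/2 \<le> b \<Longrightarrow> False" by (simp add: field_simps)

lemma xlnx_lim: "((\<lambda>t::real. t * ln t) \<longlongrightarrow> 0) (at_right 0)"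
proof (rule Lim_null_comparison)
  show "((\<lambda>t::real. 2 * sqrt t) \<longlongrightarrow> 0) (at_right 0)"
  proof -
    have "((\<lambda>t::real. 2 * sqrt t) \<longlongrightarrow> 2 * sqrt 0) (at_right 0)"
      by (intro tendsto_intros)
    then show ?thesis by simp
  qed
  have "\<forall>\<^sub>F t in at_right (0::real). 0 < t \<and> t < 1"
    using eventually_at_right_less[of 0] eventually_at_right_real[of 0 1] 
    by (simp add: eventually_conj_iff)
  then show "\<forall>\<^sub>F t in at_right (0::real). norm (t * ln t) \<le> 2 * sqrt t"
  proof (rule eventually_mono)
    fix t :: real assume t: "0 < t \<and> t < 1"
    have s: "sqrt t > 0" using t by simp
    have "ln (1 / sqrt t) \<le> 1 / sqrt t - 1" using ln_le_minus_one s by simp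
    moreover have "ln (1 / sqrt t) = - ln t / 2" using t by (simp add: ln_div ln_sqrt)
    ultimately have a: "- ln t \<le> 2 / sqrt t" by (simp add: field_simps)
    have b: "ln t \<le> 0" using t by simp
    have c: "t * ln t \<le> 0" using t b by (simp add: mult_nonneg_nonpos)
    have "norm (t * ln t) = t * (- ln t)" using c by simp
    also have "\<dots> \<le> t * (2 / sqrt t)" using a t by (intro mult_left_mono) auto
    also have "\<dots> = 2 * (t / sqrt t)" by simp
    also have "\<dots> = 2 * sqrt t" using t by (simp add: real_div_sqrt)
    finally show "norm (t * ln t) \<le> 2 * sqrt t" .
  qed
qed

lemma xlnx_cont: "continuous_on {0..} (\<lambda>t::real. t * ln t)"
proof -
  have lim0: "((\<lambda>t::real. t * ln t) \<longlongrightarrow> 0) (at_right 0)" by (rule xlnx_lim)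
  show ?thesis unfolding continuous_on_def
  proof
    fix x :: real assume x: "x \<in> {0..}"
    show "((\<lambda>t. t * ln t) \<longlongrightarrow> x * ln x) (at x within {0..})"
    proof (cases "x = 0")
      case True
      then show ?thesis using lim0 by (simp add: at_within_Ici_at_right)
    next
      case False
      then have "x > 0" using x by auto
      then have "isCont (\<lambda>t. t * ln t) x" by (intro continuous_intros) auto
      then show ?thesis using continuous_at_imp_continuous_within by (simp add: continuous_within)
    qed
  qed
qed

lemma ln_strict: fixes x :: real assumes "0 < x" "x \<noteq> 1" shows "ln x < x - 1"
proof -
  have s: "sqrt x > 0" "sqrt x \<noteq> 1" using assms by auto
  have "ln (sqrt x) \<le> sqrt x - 1" using ln_le_minus_one s by blast
  moreover have "ln (sqrt x) = ln x / 2" using assms by (simp add: ln_sqrt)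
  moreover have "(sqrt x - 1)^2 > 0" using s by simp
  moreover have "(sqrt x)^2 = x" using assms by simp
  ultimately show ?thesis by (simp add: power2_eq_square algebra_simps)
qed

lemma gibbs1: fixes a m :: real assumes "0 < a" "0 < m"
  shows "a - m \<le> a * ln a - a * ln m" and "a \<noteq> m \<Longrightarrow> a - m < a * ln a - a * ln m"
proof -
  have e: "ln (m/a) = ln m - ln a" using assms by (simp add: ln_div)
  have "a * ln (m/a) \<le> a * (m/a - 1)" using ln_le_minus_one[of "m/a"] assms
    by (intro mult_left_mono) auto
  then show "a - m \<le> a * ln a - a * ln m" using assms e by (simp add: algebra_simps)
  assume "a \<noteq> m"
  then have "m/a \<noteq> 1" using assms by auto
  then have "a * ln (m/a) < a * (m/a - 1)" using ln_strict[of "m/a"] assms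
    by (intro mult_strict_left_mono) auto
  then show "a - m < a * ln a - a * ln m" using assms e by (simp add: algebra_simps)
qed

lemma xlnx_mid:
  fixes a b :: real assumes "0 \<le> a" "0 \<le> b"
  shows "(a+b) * ln ((a+b)/2) \<le> a * ln a + b * ln b"
    and "a \<noteq> b \<Longrightarrow> (a+b) * ln ((a+b)/2) < a * ln a + b * ln b"
proof -
  have main: "(a+b) * ln ((a+b)/2) \<le> a * ln a + b * ln b \<and>
      (a \<noteq> b \<longrightarrow> (a+b) * ln ((a+b)/2) < a * ln a + b * ln b)"
  proof (cases "a = 0 \<or> b = 0")
    case True
    then show ?thesis
    proof
      assume a0: "a = 0"
      show ?thesis
      proof (cases "b = 0")
        case True then show ?thesis using a0 by simp
      next
        case False
        then have "b > 0" using assms by auto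
        then have "ln (b/2) = ln b - ln 2" by (simp add: ln_div)
        moreover have "ln 2 > (0::real)" by simp
        ultimately show ?thesis using a0 \<open>b > 0\<close> by (simp add: algebra_simps)
      qed
    next
      assume b0: "b = 0"
      show ?thesis
      proof (cases "a = 0")
        case True then show ?thesis using b0 by simp
      next
        case False
        then have "a > 0" using assms by auto
        then have "ln (a/2) = ln a - ln 2" by (simp add: ln_div)
        moreover have "ln 2 > (0::real)" by simp
        ultimately show ?thesis using b0 \<open>a > 0\<close> by (simp add: algebra_simps)
      qed
    qed
  next
    case False
    then have p: "a > 0" "b > 0" using assms by auto
    define m where "m = (a+b)/2"
    have m: "m > 0" using p by (simp add: m_def)
    note A = gibbs1[OF p(1) m] and B = gibbs1[OF p(2) m]
    have "(a+b) * ln m = a * ln m + b * ln m" by (simp add: algebra_simps)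
    moreover have "a \<noteq> b \<Longrightarrow> a \<noteq> m" by (auto simp: m_def)
    moreover have "(a - m) + (b - m) = 0" by (simp add: m_def)
    ultimately show ?thesis using A B unfolding m_def[symmetric] by fastforce
  qed
  then show "(a+b) * ln ((a+b)/2) \<le> a * ln a + b * ln b" by blast
  show "a \<noteq> b \<Longrightarrow> (a+b) * ln ((a+b)/2) < a * ln a + b * ln b" using main by blast
qed

definition toV :: "('v::finite interp \<Rightarrow> real) \<Rightarrow> real^('v set)" where
  "toV P = (\<chi> v. P v)"

lemma toV_nth[simp]: "toV P $ v = P v" by (simp add: toV_def)
lemma toV_back[simp]: "(\<lambda>v. toV P $ v) = P" by (simp add: toV_def)
lemma back_toV[simp]: "toV (\<lambda>v. x $ v) = x" by (simp add: toV_def vec_eq_iff)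

lemma enorm_dist: "enorm (\<lambda>v. P v - Q v) = dist (toV P) (toV Q)"
  by (simp add: enorm_def dist_norm norm_vec_def L2_set_def)

lemma cont_prob: "continuous_on UNIV (\<lambda>x::real^('v::finite set). prob (\<lambda>v. x $ v) \<phi>)"
  unfolding prob_def by (intro continuous_intros)

lemma cont_constr: "continuous_on UNIV (\<lambda>x::real^('v::finite set).
    (\<Sum>(ci, \<phi>i) \<leftarrow> l. ci * prob (\<lambda>v. x $ v) \<phi>i))"
proof (induction l)
  case Nil then show ?case by simp
next
  case (Cons a l)
  obtain c f where a: "a = (c,f)" by force
  show ?case using Cons unfolding a by (simp, intro continuous_intros cont_prob)
qed

lemma closed_Mod: "closed {x::real^('v::finite set). (\<lambda>v. x $ v) \<in> Mod R}"
proof -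
  have "{x::real^('v set). (\<lambda>v. x $ v) \<in> Mod R} =
     (\<Inter>v. {x. 0 \<le> x $ v}) \<inter> {x. (\<Sum>v\<in>UNIV. x $ v) = 1} \<inter>
     (\<Inter>c\<in>R. {x. 0 \<le> fst c + (\<Sum>(ci, \<phi>i) \<leftarrow> snd c. ci * prob (\<lambda>v. x $ v) \<phi>i)})"
    by (auto simp: Mod_def is_dist_def satisfies_def)
  moreover have "closed \<dots>"
    by (intro closed_Int closed_INT closed_Collect_le closed_Collect_eq continuous_intros cont_constr allI ballI)
  ultimately show ?thesis by simp
qed

lemma bounded_Mod: "bounded {x::real^('v::finite set). (\<lambda>v. x $ v) \<in> Mod R}"
proof -
  have "{x::real^('v set). (\<lambda>v. x $ v) \<in> Mod R} \<subseteq> cball 0 1"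
  proof
    fix x :: "real^('v set)" assume "x \<in> {x. (\<lambda>v. x $ v) \<in> Mod R}"
    then have "\<forall>v. 0 \<le> x $ v" "(\<Sum>v\<in>UNIV. x $ v) = 1" by (auto simp: Mod_def is_dist_def)
    then have "sum (\<lambda>i. \<bar>x$i\<bar>) UNIV = 1" by simp
    then show "x \<in> cball 0 1" using norm_le_l1_cart[of x] by simp
  qed
  then show ?thesis using bounded_cball bounded_subset by blast
qed

lemma cont_entropy: "continuous_on {x::real^('v::finite set). \<forall>v. 0 \<le> x $ v} (\<lambda>x. entropy (\<lambda>v. x $ v))"
proof -
  have h: "continuous_on {x::real^('v::finite set). \<forall>v. 0 \<le> x $ v} (\<lambda>x. x $ v * ln (x $ v))" for v
  proof -
    have "continuous_on {x::real^('v::finite set). \<forall>v. 0 \<le> x $ v} ((\<lambda>t. t * ln t) \<circ> (\<lambda>x. x $ v))"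
      by (rule continuous_on_compose) (auto intro!: continuous_intros continuous_on_subset[OF xlnx_cont])
    then show ?thesis by (simp add: o_def)
  qed
  show ?thesis unfolding entropy_def by (intro continuous_intros h)
qed

lemma entropy_mid:
  assumes "is_dist P" "is_dist Q" "P \<noteq> Q"
  shows "(entropy P + entropy Q)/2 < entropy (\<lambda>v. (P v + Q v)/2)"
proof -
  have nn: "0 \<le> P v" "0 \<le> Q v" for v using assms by (auto simp: is_dist_def)
  obtain w where w: "P w \<noteq> Q w" using assms(3) by auto
  have "(\<Sum>v\<in>UNIV. (P v + Q v) * ln ((P v + Q v)/2)) < (\<Sum>v\<in>UNIV. P v * ln (P v) + Q v * ln (Q v))"
    proof (rule sum_strict_mono_ex1)
    show "\<exists>a\<in>UNIV. (P a + Q a) * ln ((P a + Q a) / 2) < P a * ln (P a) + Q a * ln (Q a)"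
      using xlnx_mid(2)[OF nn(1)[of w] nn(2)[of w] w] by blast
  qed (use xlnx_mid nn in auto)
  moreover have "entropy (\<lambda>v. (P v + Q v)/2) = - (\<Sum>v\<in>UNIV. (P v + Q v) * ln ((P v + Q v)/2)) / 2"
    unfolding entropy_def by (simp add: sum_divide_distrib[symmetric])
  moreover have "entropy P + entropy Q = - (\<Sum>v\<in>UNIV. P v * ln (P v) + Q v * ln (Q v))"
    unfolding entropy_def by (simp add: sum.distrib)
  ultimately show ?thesis by (rule aux1)
qed

lemma prob_mid: "prob (\<lambda>v. (P v + Q v)/2) \<phi> = (prob P \<phi> + prob Q \<phi>)/2"
  unfolding prob_def by (simp add: sum.distrib sum_divide_distrib[symmetric])

lemma prob_mid2: "prob (\<lambda>v. P v / 2 + Q v / 2) \<phi> = prob P \<phi> / 2 + prob Q \<phi> / 2"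
  using prob_mid[of P Q \<phi>] by (simp add: add_divide_distrib)

lemma constr_mid: "(\<Sum>(ci, \<phi>i) \<leftarrow> l. ci * prob (\<lambda>v. (P v + Q v)/2) \<phi>i) =
   ((\<Sum>(ci, \<phi>i) \<leftarrow> l. ci * prob P \<phi>i) + (\<Sum>(ci, \<phi>i) \<leftarrow> l. ci * prob Q \<phi>i))/2"
proof (induction l)
  case Nil then show ?case by simp
next
  case (Cons a l)
  obtain c f where a: "a = (c,f)" by force
  show ?case using Cons unfolding a by (simp add: prob_mid prob_mid2 algebra_simps add_divide_distrib)
qed

lemma Mod_mid: assumes "P \<in> Mod R" "Q \<in> Mod R" shows "(\<lambda>v. (P v + Q v)/2) \<in> Mod R"
proof -
  have "is_dist (\<lambda>v. (P v + Q v)/2)" using assms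
    by (auto simp: Mod_def is_dist_def sum.distrib sum_divide_distrib[symmetric])
  moreover have "satisfies (\<lambda>v. (P v + Q v)/2) c" if "c \<in> R" for c
  proof -
    have "satisfies P c" "satisfies Q c" using assms that by (auto simp: Mod_def)
    then show ?thesis unfolding satisfies_def constr_mid by (rule aux3)
  qed
  ultimately show ?thesis by (simp add: Mod_def)
qed

lemma Mod_dist: "P \<in> Mod R \<Longrightarrow> is_dist P" by (simp add: Mod_def)

lemma max_unique:
  assumes "P \<in> Mod R" "Q \<in> Mod R" "\<forall>Q'\<in>Mod R. entropy Q' \<le> entropy P" "entropy P \<le> entropy Q"
  shows "Q = P"
proof (rule ccontr)
  assume "Q \<noteq> P"
  then have "(entropy P + entropy Q)/2 < entropy (\<lambda>v. (P v + Q v)/2)"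
    using entropy_mid Mod_dist assms by metis
  moreover have "entropy (\<lambda>v. (P v + Q v)/2) \<le> entropy P" using assms Mod_mid by blast
  ultimately show False using assms(4) by (rule aux2)
qed

lemma ME_props: fixes R :: "'v::finite constr set" assumes "consistent R"
  shows "ME R \<in> Mod R" "\<forall>Q\<in>Mod R. entropy Q \<le> entropy (ME R)"
proof -
  let ?K = "{x::real^('v set). (\<lambda>v. x $ v) \<in> Mod R}"
  have "compact ?K" using closed_Mod bounded_Mod compact_eq_bounded_closed by blast
  moreover have "?K \<noteq> {}"
  proof -
    obtain P where "P \<in> Mod R" using assms unfolding consistent_def by blast
    then have "toV P \<in> ?K" by simp
    then show ?thesis by blast
  qed
  moreover have "continuous_on ?K (\<lambda>x. entropy (\<lambda>v. x $ v))"
    by (rule continuous_on_subset[OF cont_entropy]) (auto simp: Mod_def is_dist_def)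
  ultimately obtain x where x: "x \<in> ?K" "\<forall>y\<in>?K. entropy (\<lambda>v. y $ v) \<le> entropy (\<lambda>v. x $ v)"
    using continuous_attains_sup by blast
  define P0 where "P0 = (\<lambda>v. x $ v)"
  have P01: "P0 \<in> Mod R" using x(1) unfolding P0_def by simp
  have P02: "\<forall>Q\<in>Mod R. entropy Q \<le> entropy P0"
  proof
    fix Q assume "Q \<in> Mod R"
    then have "toV Q \<in> ?K" by simp
    then have "entropy (\<lambda>v. toV Q $ v) \<le> entropy P0" using x(2) unfolding P0_def by blast
    then show "entropy Q \<le> entropy P0" by simp
  qed
  have ex: "\<exists>!P. P \<in> Mod R \<and> (\<forall>Q\<in>Mod R. entropy Q \<le> entropy P)"
  proof (rule ex1I[of _ P0])
    show "P0 \<in> Mod R \<and> (\<forall>Q\<in>Mod R. entropy Q \<le> entropy P0)" using P01 P02 by blast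
    fix P assume P: "P \<in> Mod R \<and> (\<forall>Q\<in>Mod R. entropy Q \<le> entropy P)"
    then have "entropy P0 \<le> entropy P" using P01 by blast
    then show "P = P0" using max_unique[OF P01 _ P02] P by blast
  qed
  from theI'[OF ex] show "ME R \<in> Mod R" "\<forall>Q\<in>Mod R. entropy Q \<le> entropy (ME R)"
    unfolding ME_def by auto
qed

lemma dist_le2: "is_dist P \<Longrightarrow> is_dist Q \<Longrightarrow> enorm (\<lambda>v. P v - Q v) \<le> 2"
proof -
  assume a: "is_dist P" "is_dist Q"
  have "norm (toV P) \<le> 1" "norm (toV Q) \<le> 1"
    using norm_le_l1_cart[of "toV P"] norm_le_l1_cart[of "toV Q"] a by (auto simp: is_dist_def)
  then have "norm (toV P) + norm (toV Q) \<le> 1 + 1" by (rule add_mono)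
  then have "norm (toV P - toV Q) \<le> 1 + 1" using norm_triangle_ineq4[of "toV P" "toV Q"] by (rule_tac order_trans) auto
  then show ?thesis unfolding enorm_dist dist_norm by simp
qed

lemma blaschke_close:
  assumes "A \<noteq> {}" "B \<noteq> {}" "A \<subseteq> Collect is_dist" "B \<subseteq> Collect is_dist" "blaschke A B < e"
  shows "(\<forall>P1\<in>A. \<exists>P2\<in>B. enorm (\<lambda>v. P1 v - P2 v) \<le> e) \<and> (\<forall>P2\<in>B. \<exists>P1\<in>A. enorm (\<lambda>v. P2 v - P1 v) \<le> e)"
proof -
  let ?S = "{\<delta>. (\<forall>P1\<in>A. \<exists>P2\<in>B. enorm (\<lambda>v. P1 v - P2 v) \<le> \<delta>)
                          \<and> (\<forall>P2\<in>B. \<exists>P1\<in>A. enorm (\<lambda>v. P2 v - P1 v) \<le> \<delta>)}"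
  obtain a0 where a0: "a0 \<in> A" using assms(1) by blast
  obtain b0 where b0: "b0 \<in> B" using assms(2) by blast
  have "(\<forall>P1\<in>A. \<exists>P2\<in>B. enorm (\<lambda>v. P1 v - P2 v) \<le> 2)"
  proof
    fix P1 assume "P1 \<in> A"
    then have "enorm (\<lambda>v. P1 v - b0 v) \<le> 2" using dist_le2 assms(3,4) b0 by blast
    then show "\<exists>P2\<in>B. enorm (\<lambda>v. P1 v - P2 v) \<le> 2" using b0 by blast
  qed
  moreover have "(\<forall>P2\<in>B. \<exists>P1\<in>A. enorm (\<lambda>v. P2 v - P1 v) \<le> 2)"
  proof
    fix P2 assume "P2 \<in> B"
    then have "enorm (\<lambda>v. P2 v - a0 v) \<le> 2" using dist_le2 assms(3,4) a0 by blast
    then show "\<exists>P1\<in>A. enorm (\<lambda>v. P2 v - P1 v) \<le> 2" using a0 by blast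
  qed
  ultimately have "2 \<in> ?S" unfolding mem_Collect_eq by (rule conjI)
  then have ne: "?S \<noteq> {}" by blast
  have "Inf ?S < e" using assms(5) unfolding blaschke_def .
  from cInf_lessD[OF ne this] obtain d where d: "d \<in> ?S" "d < e" by blast
  show ?thesis
  proof
    show "\<forall>P1\<in>A. \<exists>P2\<in>B. enorm (\<lambda>v. P1 v - P2 v) \<le> e"
    proof
      fix P1 assume "P1 \<in> A"
      then obtain P2 where "P2 \<in> B" "enorm (\<lambda>v. P1 v - P2 v) \<le> d" using d(1) by blast
      then show "\<exists>P2\<in>B. enorm (\<lambda>v. P1 v - P2 v) \<le> e" using order_trans[OF _ less_imp_le[OF d(2)]] by blast
    qed
    show "\<forall>P2\<in>B. \<exists>P1\<in>A. enorm (\<lambda>v. P2 v - P1 v) \<le> e"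
    proof
      fix P2 assume "P2 \<in> B"
      then obtain P1 where "P1 \<in> A" "enorm (\<lambda>v. P2 v - P1 v) \<le> d" using d(1) by blast
      then show "\<exists>P1\<in>A. enorm (\<lambda>v. P2 v - P1 v) \<le> e" using order_trans[OF _ less_imp_le[OF d(2)]] by blast
    qed
  qed
qed

theorem lemma3:
  fixes R :: "'v::finite constr set" and Rs :: "nat \<Rightarrow> 'v constr set"
  assumes "consistent R"
    and "\<And>i. consistent (Rs i)"
    and "(\<lambda>i. blaschke (Mod (Rs i)) (Mod R)) \<longlonglongrightarrow> 0"
  shows "(\<lambda>i. enorm (\<lambda>v. ME (Rs i) v - ME R v)) \<longlonglongrightarrow> 0"
proof -
  define K where "K = {x::real^('v set). (\<lambda>v. x $ v) \<in> Mod R}"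
  define Dl where "Dl = {x::real^('v set). (\<lambda>v. x $ v) \<in> Mod ({}::'v constr set)}"
  define h where "h = (\<lambda>x::real^('v set). entropy (\<lambda>v. x $ v))"
  define q where "q = (\<lambda>i. toV (ME (Rs i)))"
  define p where "p = toV (ME R)"
  have MEi: "ME (Rs i) \<in> Mod (Rs i)" "\<forall>Q\<in>Mod (Rs i). entropy Q \<le> entropy (ME (Rs i))" for i
    using ME_props assms(2) by blast+
  have MER: "ME R \<in> Mod R" "\<forall>Q\<in>Mod R. entropy Q \<le> entropy (ME R)"
    using ME_props assms(1) by blast+
  have compD: "compact Dl" unfolding Dl_def using closed_Mod bounded_Mod compact_eq_bounded_closed by blast
  have qD: "q i \<in> Dl" for i using MEi(1)[of i] by (simp add: q_def Dl_def Mod_def)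
  have contD: "continuous_on Dl h" unfolding h_def
    by (rule continuous_on_subset[OF cont_entropy]) (auto simp: Dl_def Mod_def is_dist_def)
  have Mdist: "Mod S \<subseteq> Collect is_dist" for S :: "'v constr set" by (auto simp: Mod_def)
  have DD: "\<exists>N. \<forall>i\<ge>N. (\<forall>P1\<in>Mod (Rs i). \<exists>P2\<in>Mod R. enorm (\<lambda>v. P1 v - P2 v) \<le> e) \<and>
      (\<forall>P2\<in>Mod R. \<exists>P1\<in>Mod (Rs i). enorm (\<lambda>v. P2 v - P1 v) \<le> e)" if "e > 0" for e
  proof -
    have "\<exists>N. \<forall>i\<ge>N. norm (blaschke (Mod (Rs i)) (Mod R) - 0) < e"
      using assms(3) that unfolding LIMSEQ_iff by simp
    then obtain N where N: "\<forall>i\<ge>N. norm (blaschke (Mod (Rs i)) (Mod R) - 0) < e" by blast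
    show ?thesis
    proof (intro exI allI impI)
      fix i assume "N \<le> i"
      then have "blaschke (Mod (Rs i)) (Mod R) < e" using N by auto
      then show "(\<forall>P1\<in>Mod (Rs i). \<exists>P2\<in>Mod R. enorm (\<lambda>v. P1 v - P2 v) \<le> e) \<and>
        (\<forall>P2\<in>Mod R. \<exists>P1\<in>Mod (Rs i). enorm (\<lambda>v. P2 v - P1 v) \<le> e)"
        using blaschke_close[OF _ _ Mdist Mdist] assms(1,2) unfolding consistent_def by blast
    qed
  qed
  have low: "\<exists>N. \<forall>i\<ge>N. h p - \<eta> \<le> h (q i)" if eta: "\<eta> > 0" for \<eta>
  proof -
    have "uniformly_continuous_on Dl h" using compD contD compact_uniformly_continuous by blast
    then obtain d where d: "d > 0" "\<forall>x\<in>Dl. \<forall>x'\<in>Dl. dist x' x < d \<longrightarrow> dist (h x') (h x) < \<eta>"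
      using eta unfolding uniformly_continuous_on_def by blast
    have d2: "d/2 > 0" using d(1) by simp
    from DD[OF d2] obtain N where N0: "\<forall>i\<ge>N. (\<forall>P1\<in>Mod (Rs i). \<exists>P2\<in>Mod R. enorm (\<lambda>v. P1 v - P2 v) \<le> d/2) \<and>
      (\<forall>P2\<in>Mod R. \<exists>P1\<in>Mod (Rs i). enorm (\<lambda>v. P2 v - P1 v) \<le> d/2)" by blast
    have N: "\<forall>i\<ge>N. (\<forall>P2\<in>Mod R. \<exists>P1\<in>Mod (Rs i). enorm (\<lambda>v. P2 v - P1 v) \<le> d/2)"
      using N0 by blast
    show ?thesis
    proof (intro exI allI impI)
      fix i assume "N \<le> i"
      then obtain P1 where P1: "P1 \<in> Mod (Rs i)" "enorm (\<lambda>v. ME R v - P1 v) \<le> d/2"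
        using N MER(1) by blast
      have "toV P1 \<in> Dl" "p \<in> Dl" using P1(1) MER(1) by (auto simp: Dl_def p_def Mod_def)
      moreover have "dist (toV P1) p < d"
      proof -
        have "dist p (toV P1) \<le> d/2" using P1(2) unfolding enorm_dist p_def .
        moreover have "d/2 < d" using d(1) by simp
        ultimately show ?thesis by (simp add: dist_commute)
      qed
      ultimately have "dist (h (toV P1)) (h p) < \<eta>" using d(2) by blast
      moreover have "h (toV P1) \<le> h (q i)" using MEi(2) P1(1) by (simp add: h_def q_def)
      ultimately have "h p - \<eta> < h (toV P1)" "h (toV P1) \<le> h (q i)" by (auto simp: dist_real_def abs_less_iff)
      then show "h p - \<eta> \<le> h (q i)" by simp
    qed
  qed
  have "q \<longlonglongrightarrow> p"
  proof (rule ccontr)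
    assume "\<not> q \<longlonglongrightarrow> p"
    then obtain \<epsilon> where \<epsilon>: "\<epsilon> > 0" "\<forall>N. \<exists>i\<ge>N. \<epsilon> \<le> dist (q i) p"
      unfolding lim_sequentially by (auto simp: not_less)
    then obtain f where f: "\<forall>N. f N \<ge> N \<and> \<epsilon> \<le> dist (q (f N)) p" by metis
    have "seq_compact Dl" using compD compact_imp_seq_compact by blast
    then obtain l s where ls: "l \<in> Dl" "strict_mono (s::nat\<Rightarrow>nat)" "((q \<circ> f) \<circ> s) \<longlonglongrightarrow> l"
      using seq_compactE[of Dl "q \<circ> f"] qD by auto
    define j where "j = f \<circ> s"
    have jn: "j n \<ge> n" for n
    proof -
      have "f (s n) \<ge> s n" using f by blast
      moreover have "s n \<ge> n" using seq_suble[OF ls(2)] by blast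
      ultimately show ?thesis unfolding j_def by simp
    qed
    have yl: "(\<lambda>n. q (j n)) \<longlonglongrightarrow> l" using ls(3) by (simp add: j_def o_def)
    have lK: "l \<in> K"
    proof -
      have "closed K" unfolding K_def by (rule closed_Mod)
      moreover have "l \<in> closure K"
        unfolding closure_approachable
      proof (intro allI impI)
        fix e :: real assume e: "e > 0"
        obtain N1 where N1: "\<forall>n\<ge>N1. dist (q (j n)) l < e/2" using yl e unfolding lim_sequentially
          by (meson half_gt_zero)
        have e2: "e/2 > 0" using e by simp
        from DD[OF e2] obtain N2 where N20: "\<forall>i\<ge>N2. (\<forall>P1\<in>Mod (Rs i). \<exists>P2\<in>Mod R. enorm (\<lambda>v. P1 v - P2 v) \<le> e/2) \<and>
          (\<forall>P2\<in>Mod R. \<exists>P1\<in>Mod (Rs i). enorm (\<lambda>v. P2 v - P1 v) \<le> e/2)" by blast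
        have N2: "\<forall>i\<ge>N2. (\<forall>P1\<in>Mod (Rs i). \<exists>P2\<in>Mod R. enorm (\<lambda>v. P1 v - P2 v) \<le> e/2)"
          using N20 by blast
        define n where "n = max N1 N2"
        have "N2 \<le> n" unfolding n_def by simp
        then have "j n \<ge> N2" using jn[of n] by (rule le_trans)
        then obtain P2 where P2: "P2 \<in> Mod R" "enorm (\<lambda>v. ME (Rs (j n)) v - P2 v) \<le> e/2"
          using N2 MEi(1) by blast
        have "dist (q (j n)) (toV P2) \<le> e/2" using P2(2) unfolding enorm_dist q_def .
        then have a1: "dist (toV P2) (q (j n)) \<le> e/2" by (simp add: dist_commute)
        have a2: "dist (q (j n)) l < e/2" using N1 unfolding n_def by auto
        have "dist (toV P2) l \<le> dist (toV P2) (q (j n)) + dist (q (j n)) l" by (rule dist_triangle)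
        also have "\<dots> < e/2 + e/2" by (rule add_le_less_mono[OF a1 a2])
        also have "\<dots> = e" by simp
        finally have "dist (toV P2) l < e" .
        moreover have "toV P2 \<in> K" using P2(1) by (simp add: K_def)
        ultimately show "\<exists>y\<in>K. dist y l < e" by blast
      qed
      ultimately show ?thesis by (simp add: closure_closed)
    qed
    have hl: "((\<lambda>n. h (q (j n))) \<longlongrightarrow> h l) sequentially"
      by (rule continuous_on_tendsto_compose[OF contD yl ls(1)]) (simp add: qD)
    have H: "h p - \<eta> \<le> h l" if eta: "\<eta> > 0" for \<eta>
    proof (rule tendsto_lowerbound[OF hl])
      obtain N where "\<forall>i\<ge>N. h p - \<eta> \<le> h (q i)" using low[OF eta] by blast
      then show "\<forall>\<^sub>F n in sequentially. h p - \<eta> \<le> h (q (j n))"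
        unfolding eventually_sequentially using jn le_trans by blast
    qed simp
    have "h p \<le> h l"
    proof (rule ccontr)
      assume c: "\<not> h p \<le> h l"
      then have "h p - (h p - h l)/2 \<le> h l" using H[of "(h p - h l)/2"] by simp
      then show False using aux4[OF c] by blast
    qed
    then have "(\<lambda>v. l $ v) = ME R"
      using max_unique[OF MER(1) _ MER(2)] lK by (simp add: K_def h_def p_def)
    then have "l = p" unfolding p_def by (metis back_toV)
    then obtain n where "dist (q (j n)) p < \<epsilon>" using yl \<epsilon>(1) unfolding lim_sequentially by blast
    moreover have "\<epsilon> \<le> dist (q (j n)) p" using f unfolding j_def by simp
    ultimately show False by simp
  qed
  then have "(\<lambda>i. dist (q i) p) \<longlonglongrightarrow> 0" using tendsto_dist_iff by blast
  then show ?thesis unfolding q_def p_def enorm_dist .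
qed

end
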